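(* Fix $z\in\{0,1\}$ and consider the program (P$_c$): minimize $\sum_{ij:Z_{ij}=z}c_{ij}\psi(w_{ij})$ over weights on the study units with $Z_{ij}=z$, subject to $\bigl|\sum_{ij:Z_{ij}=z}w_{ij}B_k(X_{ij})-B^*_k\bigr|\le\delta_k$ for $k=1,\dots,K$ and $w_{ij}\ge0$. Then: (a) The Lagrange dual problem of (P$_c$) is equivalent to the $L_1$-regularized empirical loss minimization $\min_{u\ge0,\lambda\in\mathbb{R}^K}\ \sum_{ij\in\mathcal{Q}}\bigl[-1\{Z_{ij}=z\}S_{ij}c_{ij}\rho\{(B(X_{ij})^\top\lambda-u_{ij})/c_{ij}\}\bigr]+(B^* )^\top\lambda+|\lambda|^\top\delta$. (b) If $\hat w^{*+}_z$ and $\lambda^\dagger_z$ are solutions of the primal problem (P$_c$) and of the dual problem in (a) respectively, then for every $ij$ with $Z_{ij}=z$ (in the study sample), $\hat w^{*+}_{z,ij}=\rho'\{B(X_{ij})^\top\lambda^\dagger_z/c_{ij}\}\,1\bigl[\rho'\{B(X_{ij})^\top\lambda^\dagger_z/c_{ij}\}>0\bigr]$.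
   Context: The combined sample consists of $n$ study units and $n^*$ target units; $\sum_{ij\in\mathcal{Q}}$ sums over all of them and $S_{ij}=1$ for study units, $S_{ij}=0$ for target units. Study unit $ij$ has binary treatment $Z_{ij}$ and covariates $X_{ij}$; all sums $\sum_{ij:Z_{ij}=z}$ are over study units. $B=(B_1,\dots,B_K)^\top$ are basis functions with $B_1\equiv1$; $B^*=(n^* )^{-1}\sum_{\text{target units}}B(X_{ij})$; $\delta=(\delta_k)$ with $\delta_k\ge0$, $\delta_1=0$; $|\lambda|$ is the componentwise absolute value. $c_{ij}>0$ are scaling factors. $\psi$ is convex, twice differentiable, with $\psi'$ invertible. Let $h(x)=\psi(-x)$ and $\rho(v)=-v(h')^{-1}(v)+h\{(h')^{-1}(v)\}$, so that $\rho'(v)=-(h')^{-1}(v)$. *)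

theory Defs
  imports "HOL-Analysis.Analysis"
begin

text \<open>Units of the combined sample Q are of type 'u; S i = True for study units.
  B k x is the k-th basis function (k = 1..K), dpsi is the derivative of psi.\<close>

definition study_z :: "'u set \<Rightarrow> ('u \<Rightarrow> bool) \<Rightarrow> ('u \<Rightarrow> nat) \<Rightarrow> nat \<Rightarrow> 'u set" where
  "study_z Q S Z z = {i \<in> Q. S i \<and> Z i = z}"

definition Bstar :: "'u set \<Rightarrow> ('u \<Rightarrow> bool) \<Rightarrow> (nat \<Rightarrow> 'x \<Rightarrow> real) \<Rightarrow> ('u \<Rightarrow> 'x) \<Rightarrow> nat \<Rightarrow> real" where
  "Bstar Q S B X k = (\<Sum>i\<in>{i\<in>Q. \<not> S i}. B k (X i)) / real (card {i\<in>Q. \<not> S i})"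

definition h_fun :: "(real \<Rightarrow> real) \<Rightarrow> real \<Rightarrow> real" where
  "h_fun psi x = psi (- x)"

definition h_deriv :: "(real \<Rightarrow> real) \<Rightarrow> real \<Rightarrow> real" where
  "h_deriv dpsi x = - dpsi (- x)"

definition h_deriv_inv :: "(real \<Rightarrow> real) \<Rightarrow> real \<Rightarrow> real" where
  "h_deriv_inv dpsi v = inv (h_deriv dpsi) v"

definition rho :: "(real \<Rightarrow> real) \<Rightarrow> (real \<Rightarrow> real) \<Rightarrow> real \<Rightarrow> real" where
  "rho psi dpsi v = - v * h_deriv_inv dpsi v + h_fun psi (h_deriv_inv dpsi v)"

definition rho_deriv :: "(real \<Rightarrow> real) \<Rightarrow> real \<Rightarrow> real" where
  "rho_deriv dpsi v = - h_deriv_inv dpsi v"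

definition primal_obj :: "'u set \<Rightarrow> ('u \<Rightarrow> real) \<Rightarrow> (real \<Rightarrow> real) \<Rightarrow> ('u \<Rightarrow> real) \<Rightarrow> real" where
  "primal_obj I c psi w = (\<Sum>i\<in>I. c i * psi (w i))"

definition bal :: "'u set \<Rightarrow> (nat \<Rightarrow> 'x \<Rightarrow> real) \<Rightarrow> ('u \<Rightarrow> 'x) \<Rightarrow> ('u \<Rightarrow> real) \<Rightarrow> nat \<Rightarrow> real" where
  "bal I B X w k = (\<Sum>i\<in>I. w i * B k (X i))"

definition primal_feasible :: "'u set \<Rightarrow> (nat \<Rightarrow> 'x \<Rightarrow> real) \<Rightarrow> ('u \<Rightarrow> 'x) \<Rightarrow> (nat \<Rightarrow> real)
    \<Rightarrow> nat \<Rightarrow> (nat \<Rightarrow> real) \<Rightarrow> ('u \<Rightarrow> real) \<Rightarrow> bool" where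
  "primal_feasible I B X Bs K \<delta> w \<longleftrightarrow>
     (\<forall>k\<in>{1..K}. \<bar>bal I B X w k - Bs k\<bar> \<le> \<delta> k) \<and> (\<forall>i\<in>I. w i \<ge> 0)"

definition primal_solution :: "'u set \<Rightarrow> ('u \<Rightarrow> real) \<Rightarrow> (real \<Rightarrow> real) \<Rightarrow> (nat \<Rightarrow> 'x \<Rightarrow> real)
    \<Rightarrow> ('u \<Rightarrow> 'x) \<Rightarrow> (nat \<Rightarrow> real) \<Rightarrow> nat \<Rightarrow> (nat \<Rightarrow> real) \<Rightarrow> ('u \<Rightarrow> real) \<Rightarrow> bool" where
  "primal_solution I c psi B X Bs K \<delta> w \<longleftrightarrow>
     primal_feasible I B X Bs K \<delta> w \<and>
     (\<forall>w'. primal_feasible I B X Bs K \<delta> w' \<longrightarrow> primal_obj I c psi w \<le> primal_obj I c psi w')"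

text \<open>Lagrangian: each constraint |bal_k - B*_k| <= delta_k is split into
  bal_k - B*_k - delta_k <= 0 (multiplier alpha_k) and B*_k - bal_k - delta_k <= 0
  (multiplier beta_k); the constraint w_i >= 0 gets multiplier u_i.\<close>

definition lagrangian :: "'u set \<Rightarrow> ('u \<Rightarrow> real) \<Rightarrow> (real \<Rightarrow> real) \<Rightarrow> (nat \<Rightarrow> 'x \<Rightarrow> real)
    \<Rightarrow> ('u \<Rightarrow> 'x) \<Rightarrow> (nat \<Rightarrow> real) \<Rightarrow> nat \<Rightarrow> (nat \<Rightarrow> real) \<Rightarrow> ('u \<Rightarrow> real)
    \<Rightarrow> (nat \<Rightarrow> real) \<Rightarrow> (nat \<Rightarrow> real) \<Rightarrow> ('u \<Rightarrow> real) \<Rightarrow> real" where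
  "lagrangian I c psi B X Bs K \<delta> w \<alpha> \<beta> u =
     primal_obj I c psi w
     + (\<Sum>k\<in>{1..K}. \<alpha> k * (bal I B X w k - Bs k - \<delta> k))
     + (\<Sum>k\<in>{1..K}. \<beta> k * (Bs k - bal I B X w k - \<delta> k))
     - (\<Sum>i\<in>I. u i * w i)"

definition dual_fun :: "'u set \<Rightarrow> ('u \<Rightarrow> real) \<Rightarrow> (real \<Rightarrow> real) \<Rightarrow> (nat \<Rightarrow> 'x \<Rightarrow> real)
    \<Rightarrow> ('u \<Rightarrow> 'x) \<Rightarrow> (nat \<Rightarrow> real) \<Rightarrow> nat \<Rightarrow> (nat \<Rightarrow> real)
    \<Rightarrow> (nat \<Rightarrow> real) \<Rightarrow> (nat \<Rightarrow> real) \<Rightarrow> ('u \<Rightarrow> real) \<Rightarrow> ereal" where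
  "dual_fun I c psi B X Bs K \<delta> \<alpha> \<beta> u =
     (INF w. ereal (lagrangian I c psi B X Bs K \<delta> w \<alpha> \<beta> u))"

definition dual_feasible :: "'u set \<Rightarrow> nat \<Rightarrow> (nat \<Rightarrow> real) \<Rightarrow> (nat \<Rightarrow> real) \<Rightarrow> ('u \<Rightarrow> real) \<Rightarrow> bool" where
  "dual_feasible I K \<alpha> \<beta> u \<longleftrightarrow>
     (\<forall>k\<in>{1..K}. \<alpha> k \<ge> 0 \<and> \<beta> k \<ge> 0) \<and> (\<forall>i\<in>I. u i \<ge> 0)"

definition dual_solution :: "'u set \<Rightarrow> ('u \<Rightarrow> real) \<Rightarrow> (real \<Rightarrow> real) \<Rightarrow> (nat \<Rightarrow> 'x \<Rightarrow> real)
    \<Rightarrow> ('u \<Rightarrow> 'x) \<Rightarrow> (nat \<Rightarrow> real) \<Rightarrow> nat \<Rightarrow> (nat \<Rightarrow> real)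
    \<Rightarrow> (nat \<Rightarrow> real) \<Rightarrow> (nat \<Rightarrow> real) \<Rightarrow> ('u \<Rightarrow> real) \<Rightarrow> bool" where
  "dual_solution I c psi B X Bs K \<delta> \<alpha> \<beta> u \<longleftrightarrow>
     dual_feasible I K \<alpha> \<beta> u \<and>
     (\<forall>\<alpha>' \<beta>' u'. dual_feasible I K \<alpha>' \<beta>' u' \<longrightarrow>
        dual_fun I c psi B X Bs K \<delta> \<alpha>' \<beta>' u' \<le> dual_fun I c psi B X Bs K \<delta> \<alpha> \<beta> u)"

text \<open>The L1-regularized empirical loss of part (a); u is indexed by all units of Q.\<close>

definition l1_obj :: "'u set \<Rightarrow> ('u \<Rightarrow> bool) \<Rightarrow> ('u \<Rightarrow> nat) \<Rightarrow> nat \<Rightarrow> ('u \<Rightarrow> real)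
    \<Rightarrow> (real \<Rightarrow> real) \<Rightarrow> (real \<Rightarrow> real) \<Rightarrow> (nat \<Rightarrow> 'x \<Rightarrow> real) \<Rightarrow> ('u \<Rightarrow> 'x)
    \<Rightarrow> (nat \<Rightarrow> real) \<Rightarrow> nat \<Rightarrow> (nat \<Rightarrow> real) \<Rightarrow> ('u \<Rightarrow> real) \<Rightarrow> (nat \<Rightarrow> real) \<Rightarrow> real" where
  "l1_obj Q S Z z c psi dpsi B X Bs K \<delta> u lam =
     (\<Sum>i\<in>Q. - (of_bool (Z i = z) * of_bool (S i)) * c i
              * rho psi dpsi (((\<Sum>k\<in>{1..K}. B k (X i) * lam k) - u i) / c i))
     + (\<Sum>k\<in>{1..K}. Bs k * lam k) + (\<Sum>k\<in>{1..K}. \<bar>lam k\<bar> * \<delta> k)"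

definition l1_solution :: "'u set \<Rightarrow> ('u \<Rightarrow> bool) \<Rightarrow> ('u \<Rightarrow> nat) \<Rightarrow> nat \<Rightarrow> ('u \<Rightarrow> real)
    \<Rightarrow> (real \<Rightarrow> real) \<Rightarrow> (real \<Rightarrow> real) \<Rightarrow> (nat \<Rightarrow> 'x \<Rightarrow> real) \<Rightarrow> ('u \<Rightarrow> 'x)
    \<Rightarrow> (nat \<Rightarrow> real) \<Rightarrow> nat \<Rightarrow> (nat \<Rightarrow> real) \<Rightarrow> ('u \<Rightarrow> real) \<Rightarrow> (nat \<Rightarrow> real) \<Rightarrow> bool" where
  "l1_solution Q S Z z c psi dpsi B X Bs K \<delta> u lam \<longleftrightarrow>
     (\<forall>i\<in>Q. u i \<ge> 0) \<and>
     (\<forall>u' lam'. (\<forall>i\<in>Q. u' i \<ge> 0) \<longrightarrow>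
        l1_obj Q S Z z c psi dpsi B X Bs K \<delta> u lam \<le> l1_obj Q S Z z c psi dpsi B X Bs K \<delta> u' lam')"

end

theory Submission
  imports Defs
begin


definition Wf :: "(real \<Rightarrow> real) \<Rightarrow> real \<Rightarrow> real" where
  "Wf dpsi v = inv dpsi (- v)"

locale cvx =
  fixes psi dpsi :: "real \<Rightarrow> real"
  assumes cv: "convex_on UNIV psi"
    and dv: "\<forall>x. (psi has_real_derivative dpsi x) (at x)"
    and bj: "bij dpsi"
begin

lemma tangent: "psi y - psi x \<ge> dpsi x * (y - x)"
  by (rule convex_on_imp_above_tangent[OF cv]) (use dv in auto)

lemma dpsi_mono: "x \<le> y \<Longrightarrow> dpsi x \<le> dpsi y"
proof -
  assume "x \<le> y"
  have a: "psi y - psi x \<ge> dpsi x * (y - x)" by (rule tangent)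
  have b: "psi x - psi y \<ge> dpsi y * (x - y)" by (rule tangent)
  have "(dpsi y - dpsi x) * (y - x) \<ge> 0" using a b by (simp add: algebra_simps)
  show ?thesis
  proof (cases "x = y")
    case False
    with \<open>x \<le> y\<close> have "y - x > 0" by simp
    with \<open>(dpsi y - dpsi x) * (y - x) \<ge> 0\<close> show ?thesis
      by (simp add: zero_le_mult_iff)
  qed simp
qed

lemma dpsi_less: "x < y \<Longrightarrow> dpsi x < dpsi y"
proof -
  assume "x < y"
  hence "dpsi x \<le> dpsi y" by (intro dpsi_mono) simp
  moreover have "dpsi x \<noteq> dpsi y" using bj \<open>x < y\<close> unfolding bij_def inj_def by auto
  ultimately show ?thesis by simp
qed

lemma dpsi_less_iff: "dpsi x < dpsi y \<longleftrightarrow> x < y"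
proof
  assume a: "dpsi x < dpsi y"
  show "x < y"
  proof (rule ccontr)
    assume "\<not> x < y"
    hence "y \<le> x" by simp
    hence "dpsi y \<le> dpsi x" by (rule dpsi_mono)
    with a show False by simp
  qed
qed (rule dpsi_less)

lemma dW: "dpsi (Wf dpsi v) = - v"
  unfolding Wf_def using bj by (simp add: bij_is_surj surj_f_inv_f)

lemma W_less_iff: "Wf dpsi v < a \<longleftrightarrow> - v < dpsi a"
  using dpsi_less_iff[of "Wf dpsi v" a] by (simp add: dW)

lemma W_gt_iff: "a < Wf dpsi v \<longleftrightarrow> dpsi a < - v"
  using dpsi_less_iff[of a "Wf dpsi v"] by (simp add: dW)

lemma W_strict_anti: "v < v' \<Longrightarrow> Wf dpsi v' < Wf dpsi v"
  by (simp add: W_less_iff dW)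

lemma W_eqI: "dpsi w = - v \<Longrightarrow> Wf dpsi v = w"
  using dW[of v] bj unfolding bij_def inj_def by auto

lemma rho_eq: "rho psi dpsi v = psi (Wf dpsi v) + v * Wf dpsi v"
proof -
  have inj: "inj (h_deriv dpsi)"
    using bj unfolding bij_def inj_def h_deriv_def by force
  have "h_deriv dpsi (- Wf dpsi v) = v" by (simp add: h_deriv_def dW)
  hence "h_deriv_inv dpsi v = inv (h_deriv dpsi) (h_deriv dpsi (- Wf dpsi v))"
    unfolding h_deriv_inv_def by simp
  hence "h_deriv_inv dpsi v = - Wf dpsi v"
    using inv_f_f[OF inj] by simp
  thus ?thesis by (simp add: rho_def h_fun_def)
qed

lemma rho_deriv_eq: "rho_deriv dpsi v = Wf dpsi v"
proof -
  have inj: "inj (h_deriv dpsi)"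
    using bj unfolding bij_def inj_def h_deriv_def by force
  have "h_deriv dpsi (- Wf dpsi v) = v" by (simp add: h_deriv_def dW)
  hence "h_deriv_inv dpsi v = inv (h_deriv dpsi) (h_deriv dpsi (- Wf dpsi v))"
    unfolding h_deriv_inv_def by simp
  hence "h_deriv_inv dpsi v = - Wf dpsi v"
    using inv_f_f[OF inj] by simp
  thus ?thesis by (simp add: rho_deriv_def)
qed

lemma rho_le: "rho psi dpsi v \<le> psi w + v * w"
proof -
  have "psi w - psi (Wf dpsi v) \<ge> dpsi (Wf dpsi v) * (w - Wf dpsi v)" by (rule tangent)
  thus ?thesis by (simp add: rho_eq dW algebra_simps)
qed

lemma rho_diff: "rho psi dpsi v' - rho psi dpsi v \<ge> (v' - v) * Wf dpsi v'"
  using rho_le[of v "Wf dpsi v'"] by (simp add: rho_eq algebra_simps)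

lemma rho_min_unique:
  assumes "psi w + v * w = rho psi dpsi v"
  shows "w = Wf dpsi v"
proof -
  have m: "\<forall>y. \<bar>w - y\<bar> < 1 \<longrightarrow> psi w + v * w \<le> psi y + v * y"
    using assms rho_le by auto
  have d: "((\<lambda>x. psi x + v * x) has_real_derivative dpsi w + v) (at w)"
    using dv by (auto intro!: derivative_eq_intros)
  have "dpsi w + v = 0"
    by (rule DERIV_local_min[OF d _ m]) simp
  thus ?thesis by (intro W_eqI[symmetric]) simp
qed

lemma W_cont:
  assumes "\<forall>x. dpsi differentiable (at x)"
  shows "isCont (Wf dpsi) v"
proof -
  have "isCont (inv dpsi) (dpsi (Wf dpsi v))"
    by (rule isCont_inverse_function[where d=1])
      (use bj assms in \<open>auto simp: bij_is_inj differentiable_imp_continuous_within\<close>)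
  hence "isCont (inv dpsi) (- v)" by (simp add: dW)
  hence "isCont (\<lambda>x. inv dpsi (- x)) v"
    using isCont_o2[where f="uminus" and a=v and g="inv dpsi"] by (auto intro: continuous_intros)
  thus ?thesis unfolding Wf_def[abs_def] .
qed

end



definition tt :: "(nat \<Rightarrow> 'x \<Rightarrow> real) \<Rightarrow> ('u \<Rightarrow> 'x) \<Rightarrow> nat \<Rightarrow> ('u \<Rightarrow> real) \<Rightarrow> (nat \<Rightarrow> real) \<Rightarrow> ('u \<Rightarrow> real) \<Rightarrow> 'u \<Rightarrow> real" where
  "tt B X K c lam u i = ((\<Sum>k\<in>{1..K}. B k (X i) * lam k) - u i) / c i"

definition Gf where
  "Gf I c psi dpsi B X Bs K \<delta> lam u =
     (\<Sum>i\<in>I. c i * rho psi dpsi (tt B X K c lam u i)) - (\<Sum>k\<in>{1..K}. Bs k * lam k)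
       - (\<Sum>k\<in>{1..K}. \<bar>lam k\<bar> * \<delta> k)"

lemma ct_sum:
  assumes "\<forall>i\<in>I. c i \<noteq> 0"
  shows "(\<Sum>i\<in>I. c i * tt B X K c lam u i * x i) =
    (\<Sum>k\<in>{1..K}. lam k * bal I B X x k) - (\<Sum>i\<in>I. u i * x i)"
proof -
  have sw: "(\<Sum>k\<in>{1..K}. lam k * bal I B X x k) = (\<Sum>i\<in>I. \<Sum>k\<in>{1..K}. x i * B k (X i) * lam k)"
  proof -
    have "(\<Sum>k\<in>{1..K}. lam k * bal I B X x k) = (\<Sum>k\<in>{1..K}. \<Sum>i\<in>I. x i * B k (X i) * lam k)"
      unfolding bal_def sum_distrib_left by (intro sum.cong refl) (simp add: mult_ac)
    also have "\<dots> = (\<Sum>i\<in>I. \<Sum>k\<in>{1..K}. x i * B k (X i) * lam k)"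
      by (rule sum.swap)
    finally show ?thesis .
  qed
  have "(\<Sum>i\<in>I. c i * tt B X K c lam u i * x i) =
        (\<Sum>i\<in>I. (\<Sum>k\<in>{1..K}. x i * B k (X i) * lam k) - u i * x i)"
  proof (rule sum.cong[OF refl])
    fix i assume "i \<in> I"
    hence "c i \<noteq> 0" using assms by auto
    hence 1: "c i * tt B X K c lam u i * x i = ((\<Sum>k\<in>{1..K}. B k (X i) * lam k) - u i) * x i"
      by (simp add: tt_def)
    have 2: "(\<Sum>k\<in>{1..K}. B k (X i) * lam k) * x i = (\<Sum>k\<in>{1..K}. x i * B k (X i) * lam k)"
      unfolding sum_distrib_right by (intro sum.cong refl) (simp add: mult_ac)
    show "c i * tt B X K c lam u i * x i = (\<Sum>k\<in>{1..K}. x i * B k (X i) * lam k) - u i * x i"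
      unfolding 1 left_diff_distrib 2 by simp
  qed
  also have "\<dots> = (\<Sum>i\<in>I. \<Sum>k\<in>{1..K}. x i * B k (X i) * lam k) - (\<Sum>i\<in>I. u i * x i)"
    by (rule sum_subtractf)
  finally show ?thesis unfolding sw .
qed

lemma l1_eq:
  assumes "finite Q"
  shows "l1_obj Q S Z z c psi dpsi B X Bs K \<delta> u lam = - Gf (study_z Q S Z z) c psi dpsi B X Bs K \<delta> lam u"
proof -
  have "(\<Sum>i\<in>Q. - (of_bool (Z i = z) * of_bool (S i)) * c i
              * rho psi dpsi (((\<Sum>k\<in>{1..K}. B k (X i) * lam k) - u i) / c i))
      = (\<Sum>i\<in>Q. - (if S i \<and> Z i = z then (c i * rho psi dpsi (tt B X K c lam u i)) else 0))"
    by (intro sum.cong) (auto simp: tt_def)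
  also have "\<dots> = - (\<Sum>i\<in>Q. (if S i \<and> Z i = z then (c i * rho psi dpsi (tt B X K c lam u i)) else 0))"
    by (rule sum_negf)
  also have "\<dots> = - (\<Sum>i\<in>study_z Q S Z z. c i * rho psi dpsi (tt B X K c lam u i))"
    using assms by (simp add: sum.inter_filter study_z_def)
  finally show ?thesis by (simp add: l1_obj_def Gf_def)
qed

lemma Gf_cong_u:
  assumes "\<forall>i\<in>I. u i = u' i"
  shows "Gf I c psi dpsi B X Bs K \<delta> lam u = Gf I c psi dpsi B X Bs K \<delta> lam u'"
  unfolding Gf_def tt_def using assms by (intro arg_cong2[where f="(-)"] sum.cong refl) auto

lemma lag_eq:
  assumes "\<forall>i\<in>I. c i \<noteq> 0"
  shows "lagrangian I c psi B X Bs K \<delta> w \<alpha> \<beta> u =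
    (\<Sum>i\<in>I. c i * (psi (w i) + tt B X K c (\<lambda>k. \<alpha> k - \<beta> k) u i * w i))
    - (\<Sum>k\<in>{1..K}. Bs k * (\<alpha> k - \<beta> k)) - (\<Sum>k\<in>{1..K}. (\<alpha> k + \<beta> k) * \<delta> k)"
proof -
  have cs: "(\<Sum>i\<in>I. c i * tt B X K c (\<lambda>k. \<alpha> k - \<beta> k) u i * w i) =
    (\<Sum>k\<in>{1..K}. (\<alpha> k - \<beta> k) * bal I B X w k) - (\<Sum>i\<in>I. u i * w i)"
    by (rule ct_sum[OF assms])
  have "(\<Sum>i\<in>I. c i * (psi (w i) + tt B X K c (\<lambda>k. \<alpha> k - \<beta> k) u i * w i))
      = primal_obj I c psi w + (\<Sum>i\<in>I. c i * tt B X K c (\<lambda>k. \<alpha> k - \<beta> k) u i * w i)"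
    by (simp add: primal_obj_def distrib_left sum.distrib mult.assoc)
  moreover have "(\<Sum>k\<in>{1..K}. \<alpha> k * (bal I B X w k - Bs k - \<delta> k))
     + (\<Sum>k\<in>{1..K}. \<beta> k * (Bs k - bal I B X w k - \<delta> k))
     = (\<Sum>k\<in>{1..K}. (\<alpha> k - \<beta> k) * bal I B X w k) - (\<Sum>k\<in>{1..K}. Bs k * (\<alpha> k - \<beta> k))
       - (\<Sum>k\<in>{1..K}. (\<alpha> k + \<beta> k) * \<delta> k)"
  proof -
    have "(\<Sum>k\<in>{1..K}. \<alpha> k * (bal I B X w k - Bs k - \<delta> k))
     + (\<Sum>k\<in>{1..K}. \<beta> k * (Bs k - bal I B X w k - \<delta> k))
     = (\<Sum>k\<in>{1..K}. \<alpha> k * (bal I B X w k - Bs k - \<delta> k) + \<beta> k * (Bs k - bal I B X w k - \<delta> k))"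
      by (rule sum.distrib[symmetric])
    also have "\<dots> = (\<Sum>k\<in>{1..K}. (\<alpha> k - \<beta> k) * bal I B X w k - Bs k * (\<alpha> k - \<beta> k) - (\<alpha> k + \<beta> k) * \<delta> k)"
      by (rule sum.cong) (simp_all add: algebra_simps)
    also have "\<dots> = (\<Sum>k\<in>{1..K}. (\<alpha> k - \<beta> k) * bal I B X w k) - (\<Sum>k\<in>{1..K}. Bs k * (\<alpha> k - \<beta> k))
       - (\<Sum>k\<in>{1..K}. (\<alpha> k + \<beta> k) * \<delta> k)"
      by (simp only: sum_subtractf)
    finally show ?thesis .
  qed
  ultimately show ?thesis unfolding lagrangian_def cs by simp
qed

context cvx begin

lemma dual_eq:
  assumes "finite I" "\<forall>i\<in>I. c i > 0"
  shows "dual_fun I c psi B X Bs K \<delta> \<alpha> \<beta> u =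
    ereal (Gf I c psi dpsi B X Bs K \<delta> (\<lambda>k. \<alpha> k - \<beta> k) u
      + (\<Sum>k\<in>{1..K}. (\<bar>\<alpha> k - \<beta> k\<bar> - (\<alpha> k + \<beta> k)) * \<delta> k))"
proof -
  let ?t = "tt B X K c (\<lambda>k. \<alpha> k - \<beta> k) u"
  let ?V = "(\<Sum>i\<in>I. c i * rho psi dpsi (?t i))
    - (\<Sum>k\<in>{1..K}. Bs k * (\<alpha> k - \<beta> k)) - (\<Sum>k\<in>{1..K}. (\<alpha> k + \<beta> k) * \<delta> k)"
  have c0: "\<forall>i\<in>I. c i \<noteq> 0" using assms by auto
  have V: "?V = Gf I c psi dpsi B X Bs K \<delta> (\<lambda>k. \<alpha> k - \<beta> k) u
      + (\<Sum>k\<in>{1..K}. (\<bar>\<alpha> k - \<beta> k\<bar> - (\<alpha> k + \<beta> k)) * \<delta> k)"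
  proof -
    have "(\<Sum>k\<in>{1..K}. (\<bar>\<alpha> k - \<beta> k\<bar> - (\<alpha> k + \<beta> k)) * \<delta> k)
      = (\<Sum>k\<in>{1..K}. \<bar>\<alpha> k - \<beta> k\<bar> * \<delta> k) - (\<Sum>k\<in>{1..K}. (\<alpha> k + \<beta> k) * \<delta> k)"
      by (simp only: left_diff_distrib sum_subtractf)
    thus ?thesis unfolding Gf_def by linarith
  qed
  have low: "?V \<le> lagrangian I c psi B X Bs K \<delta> w \<alpha> \<beta> u" for w
  proof -
    have "(\<Sum>i\<in>I. c i * rho psi dpsi (?t i)) \<le> (\<Sum>i\<in>I. c i * (psi (w i) + ?t i * w i))"
    proof (rule sum_mono)
      fix i assume "i \<in> I"
      hence "c i \<ge> 0" using assms by (auto simp: less_imp_le)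
      thus "c i * rho psi dpsi (?t i) \<le> c i * (psi (w i) + ?t i * w i)"
        by (rule mult_left_mono[OF rho_le])
    qed
    thus ?thesis unfolding lag_eq[OF c0] by linarith
  qed
  have att: "lagrangian I c psi B X Bs K \<delta> (\<lambda>i. Wf dpsi (?t i)) \<alpha> \<beta> u = ?V"
    unfolding lag_eq[OF c0] by (simp add: rho_eq)
  have "dual_fun I c psi B X Bs K \<delta> \<alpha> \<beta> u = ereal ?V"
    unfolding dual_fun_def
  proof (rule antisym)
    show "(INF w. ereal (lagrangian I c psi B X Bs K \<delta> w \<alpha> \<beta> u)) \<le> ereal ?V"
      by (rule INF_lower2[of "\<lambda>i. Wf dpsi (?t i)"]) (simp_all only: att UNIV_I order_refl)
    show "ereal ?V \<le> (INF w. ereal (lagrangian I c psi B X Bs K \<delta> w \<alpha> \<beta> u))"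
    proof (rule INF_greatest)
      fix w show "ereal ?V \<le> ereal (lagrangian I c psi B X Bs K \<delta> w \<alpha> \<beta> u)"
        using low[of w] by (simp only: ereal_less_eq(3))
    qed
  qed
  thus ?thesis by (simp only: V)
qed

lemma Gdiff:
  assumes "finite I" "\<forall>i\<in>I. c i > 0"
  shows "Gf I c psi dpsi B X Bs K \<delta> lam' u' - Gf I c psi dpsi B X Bs K \<delta> lam u \<ge>
    (\<Sum>i\<in>I. ((\<Sum>k\<in>{1..K}. B k (X i) * (lam' k - lam k)) - (u' i - u i)) * Wf dpsi (tt B X K c lam' u' i))
    - (\<Sum>k\<in>{1..K}. Bs k * (lam' k - lam k)) - (\<Sum>k\<in>{1..K}. \<delta> k * (\<bar>lam' k\<bar> - \<bar>lam k\<bar>))"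
proof -
  have "(\<Sum>i\<in>I. ((\<Sum>k\<in>{1..K}. B k (X i) * (lam' k - lam k)) - (u' i - u i)) * Wf dpsi (tt B X K c lam' u' i))
     \<le> (\<Sum>i\<in>I. c i * rho psi dpsi (tt B X K c lam' u' i) - c i * rho psi dpsi (tt B X K c lam u i))"
  proof (intro sum_mono)
    fix i assume "i \<in> I"
    hence cp: "c i > 0" using assms by auto
    have e: "(\<Sum>k\<in>{1..K}. B k (X i) * (lam' k - lam k)) - (u' i - u i)
        = c i * (tt B X K c lam' u' i - tt B X K c lam u i)"
      using cp by (simp add: tt_def field_simps sum_subtractf)
    have "c i * ((tt B X K c lam' u' i - tt B X K c lam u i) * Wf dpsi (tt B X K c lam' u' i))
       \<le> c i * (rho psi dpsi (tt B X K c lam' u' i) - rho psi dpsi (tt B X K c lam u i))"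
      using cp rho_diff by (intro mult_left_mono) auto
    thus "((\<Sum>k\<in>{1..K}. B k (X i) * (lam' k - lam k)) - (u' i - u i)) * Wf dpsi (tt B X K c lam' u' i)
     \<le> c i * rho psi dpsi (tt B X K c lam' u' i) - c i * rho psi dpsi (tt B X K c lam u i)"
      unfolding e by (simp add: algebra_simps)
  qed
  moreover have "(\<Sum>i\<in>I. c i * rho psi dpsi (tt B X K c lam' u' i) - c i * rho psi dpsi (tt B X K c lam u i))
     = (\<Sum>i\<in>I. c i * rho psi dpsi (tt B X K c lam' u' i)) - (\<Sum>i\<in>I. c i * rho psi dpsi (tt B X K c lam u i))"
    by (rule sum_subtractf)
  moreover have "(\<Sum>k\<in>{1..K}. Bs k * (lam' k - lam k)) = (\<Sum>k\<in>{1..K}. Bs k * lam' k) - (\<Sum>k\<in>{1..K}. Bs k * lam k)"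
    by (simp add: right_diff_distrib sum_subtractf)
  moreover have "(\<Sum>k\<in>{1..K}. \<delta> k * (\<bar>lam' k\<bar> - \<bar>lam k\<bar>)) = (\<Sum>k\<in>{1..K}. \<bar>lam' k\<bar> * \<delta> k) - (\<Sum>k\<in>{1..K}. \<bar>lam k\<bar> * \<delta> k)"
    by (simp add: right_diff_distrib sum_subtractf mult.commute)
  ultimately show ?thesis
    unfolding Gf_def by linarith
qed

end



lemma lim_right_le:
  fixes g :: "real \<Rightarrow> real"
  assumes c: "isCont g 0" and e: "e > 0" and h: "\<forall>s. 0 < s \<and> s < e \<longrightarrow> g s \<le> a"
  shows "g 0 \<le> a"
proof (rule ccontr)
  assume "\<not> g 0 \<le> a"
  hence "a < g 0" by simp
  from order_tendstoD(1)[OF c[unfolded isCont_def] this]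
  obtain d where d: "d > 0" "\<forall>x. x \<noteq> 0 \<and> dist x 0 < d \<longrightarrow> a < g x"
    unfolding eventually_at by auto
  define s where "s = min d e / 2"
  have "0 < s" "s < e" using d e by (auto simp: s_def)
  have "s < d" using d e by (auto simp: s_def)
  hence "a < g s" using d(2) \<open>0 < s\<close> by (auto simp: dist_real_def)
  moreover have "g s \<le> a" using h \<open>0 < s\<close> \<open>s < e\<close> by auto
  ultimately show False by simp
qed

lemma lim_right_ge:
  fixes g :: "real \<Rightarrow> real"
  assumes c: "isCont g 0" and e: "e > 0" and h: "\<forall>s. 0 < s \<and> s < e \<longrightarrow> a \<le> g s"
  shows "a \<le> g 0"
proof -
  have "isCont (\<lambda>s. - g s) 0" using c by (intro continuous_intros)
  from lim_right_le[OF this e, of "-a"] h show ?thesis by auto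
qed

lemma lim_left_le:
  fixes g :: "real \<Rightarrow> real"
  assumes c: "isCont g 0" and e: "e > 0" and h: "\<forall>s. 0 < s \<and> s < e \<longrightarrow> g (- s) \<le> a"
  shows "g 0 \<le> a"
proof -
  have "isCont (\<lambda>s. g (- s)) 0" using c isCont_o2[where f=uminus and a=0 and g=g]
    by (auto intro: continuous_intros)
  from lim_right_le[OF this e, of a] h show ?thesis by auto
qed

lemma lim_left_ge:
  fixes g :: "real \<Rightarrow> real"
  assumes c: "isCont g 0" and e: "e > 0" and h: "\<forall>s. 0 < s \<and> s < e \<longrightarrow> a \<le> g (- s)"
  shows "a \<le> g 0"
proof -
  have "isCont (\<lambda>s. - g s) 0" using c by (intro continuous_intros)
  from lim_left_le[OF this e, of "-a"] h show ?thesis by auto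
qed




context cvx begin

lemma u_pert:
  assumes fin: "finite I" and cp: "\<forall>i\<in>I. c i > 0" and i: "i \<in> I"
  shows "Gf I c psi dpsi B X Bs K \<delta> lam (u(i := u i + s)) - Gf I c psi dpsi B X Bs K \<delta> lam u
     \<ge> - s * Wf dpsi (tt B X K c lam u i - s / c i)"
proof -
  let ?u = "u(i := u i + s)"
  have "(\<Sum>j\<in>I. ((\<Sum>k\<in>{1..K}. B k (X j) * (lam k - lam k)) - (?u j - u j)) * Wf dpsi (tt B X K c lam ?u j))
      = (\<Sum>j\<in>I. if j = i then - s * Wf dpsi (tt B X K c lam ?u i) else 0)"
    by (intro sum.cong refl) auto
  also have "\<dots> = - s * Wf dpsi (tt B X K c lam ?u i)"
    using fin i by simp
  also have "tt B X K c lam ?u i = tt B X K c lam u i - s / c i"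
    by (simp add: tt_def diff_divide_distrib add_divide_distrib)
  finally have e: "(\<Sum>j\<in>I. ((\<Sum>k\<in>{1..K}. B k (X j) * (lam k - lam k)) - (?u j - u j)) * Wf dpsi (tt B X K c lam ?u j))
      = - s * Wf dpsi (tt B X K c lam u i - s / c i)" .
  show ?thesis using Gdiff[OF fin cp, where lam'=lam and u'="?u" and lam=lam and u=u and B=B and X=X and K=K and Bs=Bs and \<delta>=\<delta>] unfolding e by simp
qed

lemma lam_pert:
  assumes fin: "finite I" and cp: "\<forall>i\<in>I. c i > 0" and k: "k \<in> {1..K}"
  shows "Gf I c psi dpsi B X Bs K \<delta> (lam(k := lam k + s)) u - Gf I c psi dpsi B X Bs K \<delta> lam u
     \<ge> s * (\<Sum>i\<in>I. B k (X i) * Wf dpsi (tt B X K c lam u i + s * B k (X i) / c i))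
       - s * Bs k - \<delta> k * (\<bar>lam k + s\<bar> - \<bar>lam k\<bar>)"
proof -
  let ?l = "lam(k := lam k + s)"
  have tt: "tt B X K c ?l u i = tt B X K c lam u i + s * B k (X i) / c i" for i
  proof -
    have "(\<Sum>j\<in>{1..K}. B j (X i) * ?l j) = (\<Sum>j\<in>{1..K}. B j (X i) * lam j + (if j = k then s * B k (X i) else 0))"
      by (intro sum.cong refl) (auto simp: algebra_simps)
    also have "\<dots> = (\<Sum>j\<in>{1..K}. B j (X i) * lam j) + s * B k (X i)"
      using k by (simp add: sum.distrib)
    finally have eq: "(\<Sum>j\<in>{1..K}. B j (X i) * ?l j) = (\<Sum>j\<in>{1..K}. B j (X i) * lam j) + s * B k (X i)" .
    show ?thesis unfolding tt_def eq by (simp add: diff_divide_distrib add_divide_distrib)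
  qed
  have s1: "(\<Sum>j\<in>{1..K}. B j (X i) * (?l j - lam j)) = s * B k (X i)" for i
  proof -
    have "(\<Sum>j\<in>{1..K}. B j (X i) * (?l j - lam j)) = (\<Sum>j\<in>{1..K}. if j = k then s * B k (X i) else 0)"
      by (intro sum.cong refl) auto
    thus ?thesis using k by simp
  qed
  have s2: "(\<Sum>j\<in>{1..K}. Bs j * (?l j - lam j)) = s * Bs k"
  proof -
    have "(\<Sum>j\<in>{1..K}. Bs j * (?l j - lam j)) = (\<Sum>j\<in>{1..K}. if j = k then s * Bs k else 0)"
      by (intro sum.cong refl) auto
    thus ?thesis using k by simp
  qed
  have s3: "(\<Sum>j\<in>{1..K}. \<delta> j * (\<bar>?l j\<bar> - \<bar>lam j\<bar>)) = \<delta> k * (\<bar>lam k + s\<bar> - \<bar>lam k\<bar>)"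
  proof -
    have "(\<Sum>j\<in>{1..K}. \<delta> j * (\<bar>?l j\<bar> - \<bar>lam j\<bar>)) = (\<Sum>j\<in>{1..K}. if j = k then \<delta> k * (\<bar>lam k + s\<bar> - \<bar>lam k\<bar>) else 0)"
      by (intro sum.cong refl) auto
    thus ?thesis using k by simp
  qed
  have s4: "(\<Sum>i\<in>I. ((\<Sum>j\<in>{1..K}. B j (X i) * (?l j - lam j)) - (u i - u i)) * Wf dpsi (tt B X K c ?l u i))
     = s * (\<Sum>i\<in>I. B k (X i) * Wf dpsi (tt B X K c lam u i + s * B k (X i) / c i))"
    unfolding s1 tt sum_distrib_left by (simp add: mult.assoc)
  show ?thesis using Gdiff[OF fin cp, where lam'="?l" and u'=u and lam=lam and u=u and B=B and X=X and K=K and Bs=Bs and \<delta>=\<delta>] unfolding s2 s3 s4 .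
qed

end


theorem theoremS2:
  fixes Q :: "'u set" and S :: "'u \<Rightarrow> bool" and Z :: "'u \<Rightarrow> nat" and z :: nat
    and X :: "'u \<Rightarrow> 'x" and B :: "nat \<Rightarrow> 'x \<Rightarrow> real" and K :: nat
    and \<delta> :: "nat \<Rightarrow> real" and c :: "'u \<Rightarrow> real"
    and psi dpsi :: "real \<Rightarrow> real"
  assumes finQ: "finite Q"
    and z01: "z \<in> {0, 1}"
    and Z01: "\<forall>i\<in>Q. S i \<longrightarrow> Z i \<in> {0, 1}"
    and K1: "K \<ge> 1"
    and B1: "\<forall>x. B 1 x = 1"
    and delta_nonneg: "\<forall>k\<in>{1..K}. \<delta> k \<ge> 0"
    and delta1: "\<delta> 1 = 0"
    and c_pos: "\<forall>i\<in>Q. c i > 0"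
    and psi_convex: "convex_on UNIV psi"
    and psi_deriv: "\<forall>x. (psi has_real_derivative dpsi x) (at x)"
    and psi_twice: "\<forall>x. dpsi differentiable (at x)"
    and dpsi_inv: "bij dpsi"
  shows
    "(\<forall>u lam. (\<forall>i\<in>Q. u i \<ge> 0) \<longrightarrow>
        (l1_solution Q S Z z c psi dpsi B X (Bstar Q S B X) K \<delta> u lam \<longleftrightarrow>
         dual_solution (study_z Q S Z z) c psi B X (Bstar Q S B X) K \<delta>
           (\<lambda>k. max (lam k) 0) (\<lambda>k. max (- lam k) 0) u))
     \<and> (\<forall>\<alpha> \<beta> u. dual_solution (study_z Q S Z z) c psi B X (Bstar Q S B X) K \<delta> \<alpha> \<beta> u \<longrightarrow>
          l1_solution Q S Z z c psi dpsi B X (Bstar Q S B X) K \<delta>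
            (\<lambda>i. if i \<in> study_z Q S Z z then u i else 0) (\<lambda>k. \<alpha> k - \<beta> k))
     \<and> (SUP p\<in>{(\<alpha>, \<beta>, u). dual_feasible (study_z Q S Z z) K \<alpha> \<beta> u}.
           dual_fun (study_z Q S Z z) c psi B X (Bstar Q S B X) K \<delta>
             (fst p) (fst (snd p)) (snd (snd p)))
        = - (INF p\<in>{(u, lam). \<forall>i\<in>Q. u i \<ge> 0}.
               ereal (l1_obj Q S Z z c psi dpsi B X (Bstar Q S B X) K \<delta> (fst p) (snd p)))
     \<and> (\<forall>w u lam.
          primal_solution (study_z Q S Z z) c psi B X (Bstar Q S B X) K \<delta> w \<and>
          l1_solution Q S Z z c psi dpsi B X (Bstar Q S B X) K \<delta> u lam \<longrightarrow>
          (\<forall>i\<in>study_z Q S Z z.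
             w i = rho_deriv dpsi ((\<Sum>k\<in>{1..K}. B k (X i) * lam k) / c i)
                   * of_bool (rho_deriv dpsi ((\<Sum>k\<in>{1..K}. B k (X i) * lam k) / c i) > 0)))"
proof -
  interpret cvx psi dpsi using psi_convex psi_deriv dpsi_inv by unfold_locales auto
  define I where "I = study_z Q S Z z"
  define Bs where "Bs = Bstar Q S B X"
  define G where "G = Gf I c psi dpsi B X Bs K \<delta>"
  define corr where "corr = (\<lambda>\<alpha> \<beta>. (\<Sum>k\<in>{1..K}. (\<bar>\<alpha> k - \<beta> k\<bar> - (\<alpha> k + \<beta> k :: real)) * \<delta> k))"
  define ext where "ext = (\<lambda>u i. if i \<in> I then u i else (0::real))"
  have IQ: "I \<subseteq> Q" unfolding I_def study_z_def by auto
  have finI: "finite I" using finQ IQ finite_subset by blast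
  have cI: "\<forall>i\<in>I. c i > 0" using c_pos IQ by auto
  have L1: "l1_obj Q S Z z c psi dpsi B X Bs K \<delta> u lam = - G lam u" for u lam
    unfolding G_def I_def by (rule l1_eq[OF finQ])
  have D: "dual_fun I c psi B X Bs K \<delta> \<alpha> \<beta> u = ereal (G (\<lambda>k. \<alpha> k - \<beta> k) u + corr \<alpha> \<beta>)" for \<alpha> \<beta> u
    unfolding G_def corr_def by (rule dual_eq[OF finI cI])
  have corr_le: "corr \<alpha> \<beta> \<le> 0" if "\<forall>k\<in>{1..K}. \<alpha> k \<ge> 0 \<and> \<beta> k \<ge> 0" for \<alpha> \<beta>
    unfolding corr_def
  proof (rule sum_nonpos)
    fix k assume k: "k \<in> {1..K}"
    have "\<alpha> k \<ge> 0" "\<beta> k \<ge> 0" using that k by auto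
    hence "\<bar>\<alpha> k - \<beta> k\<bar> - (\<alpha> k + \<beta> k) \<le> 0" by linarith
    moreover have "\<delta> k \<ge> 0" using delta_nonneg k by auto
    ultimately show "(\<bar>\<alpha> k - \<beta> k\<bar> - (\<alpha> k + \<beta> k)) * \<delta> k \<le> 0"
      by (simp add: mult_nonpos_nonneg)
  qed
  have maxl: "(\<lambda>k. max (lam k) 0 - max (- lam k) 0) = lam" for lam :: "nat \<Rightarrow> real"
    by (rule ext) (simp add: max_def)
  have corr_max: "corr (\<lambda>k. max (lam k) 0) (\<lambda>k. max (- lam k) 0) = 0" for lam :: "nat \<Rightarrow> real"
    unfolding corr_def by (intro sum.neutral ballI) (simp add: max_def)
  have Dmax: "dual_fun I c psi B X Bs K \<delta> (\<lambda>k. max (lam k) 0) (\<lambda>k. max (- lam k) 0) u = ereal (G lam u)" for lam u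
    unfolding D maxl corr_max by simp
  have feas_max: "dual_feasible I K (\<lambda>k. max (lam k) 0) (\<lambda>k. max (- lam k) 0) u"
    if "\<forall>i\<in>Q. u i \<ge> 0" for lam u
    using that IQ unfolding dual_feasible_def by auto
  have Gext: "G lam (ext u) = G lam u" for lam u
    unfolding G_def ext_def by (rule Gf_cong_u) simp
  have ext0: "\<forall>i\<in>Q. ext u i \<ge> 0" if "\<forall>i\<in>I. u i \<ge> 0" for u
    using that unfolding ext_def by auto
  have l1iff: "l1_solution Q S Z z c psi dpsi B X Bs K \<delta> u lam \<longleftrightarrow>
      (\<forall>i\<in>Q. u i \<ge> 0) \<and> (\<forall>u' lam'. (\<forall>i\<in>Q. u' i \<ge> 0) \<longrightarrow> G lam' u' \<le> G lam u)" for u lam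
    unfolding l1_solution_def L1 by simp
  have Dle: "dual_fun I c psi B X Bs K \<delta> \<alpha> \<beta> u \<le> ereal (G (\<lambda>k. \<alpha> k - \<beta> k) (ext u))"
    if "dual_feasible I K \<alpha> \<beta> u" for \<alpha> \<beta> u
  proof -
    have "corr \<alpha> \<beta> \<le> 0" using that corr_le unfolding dual_feasible_def by auto
    thus ?thesis unfolding D Gext by simp
  qed
  have P1: "\<forall>u lam. (\<forall>i\<in>Q. u i \<ge> 0) \<longrightarrow>
        (l1_solution Q S Z z c psi dpsi B X Bs K \<delta> u lam \<longleftrightarrow>
         dual_solution I c psi B X Bs K \<delta> (\<lambda>k. max (lam k) 0) (\<lambda>k. max (- lam k) 0) u)"
  proof (intro allI impI)
    fix u :: "'u \<Rightarrow> real" and lam :: "nat \<Rightarrow> real" assume u0: "\<forall>i\<in>Q. u i \<ge> 0"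
    show "l1_solution Q S Z z c psi dpsi B X Bs K \<delta> u lam \<longleftrightarrow>
         dual_solution I c psi B X Bs K \<delta> (\<lambda>k. max (lam k) 0) (\<lambda>k. max (- lam k) 0) u"
    proof
      assume "l1_solution Q S Z z c psi dpsi B X Bs K \<delta> u lam"
      hence H: "\<forall>u' lam'. (\<forall>i\<in>Q. u' i \<ge> 0) \<longrightarrow> G lam' u' \<le> G lam u" using l1iff by blast
      show "dual_solution I c psi B X Bs K \<delta> (\<lambda>k. max (lam k) 0) (\<lambda>k. max (- lam k) 0) u"
        unfolding dual_solution_def
      proof (intro conjI allI impI)
        show "dual_feasible I K (\<lambda>k. max (lam k) 0) (\<lambda>k. max (- lam k) 0) u" by (rule feas_max[OF u0])
        fix \<alpha>' \<beta>' :: "nat \<Rightarrow> real" and u' :: "'u \<Rightarrow> real" assume f: "dual_feasible I K \<alpha>' \<beta>' u'"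
        have "\<forall>i\<in>Q. ext u' i \<ge> 0" using f ext0 unfolding dual_feasible_def by auto
        hence "G (\<lambda>k. \<alpha>' k - \<beta>' k) (ext u') \<le> G lam u" using H by blast
        hence "ereal (G (\<lambda>k. \<alpha>' k - \<beta>' k) (ext u')) \<le> ereal (G lam u)" by simp
        with Dle[OF f] show "dual_fun I c psi B X Bs K \<delta> \<alpha>' \<beta>' u'
            \<le> dual_fun I c psi B X Bs K \<delta> (\<lambda>k. max (lam k) 0) (\<lambda>k. max (- lam k) 0) u"
          unfolding Dmax by (rule order_trans)
      qed
    next
      assume ds: "dual_solution I c psi B X Bs K \<delta> (\<lambda>k. max (lam k) 0) (\<lambda>k. max (- lam k) 0) u"
      show "l1_solution Q S Z z c psi dpsi B X Bs K \<delta> u lam"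
        unfolding l1iff
      proof (intro conjI allI impI)
        show "\<forall>i\<in>Q. u i \<ge> 0" by (rule u0)
        fix u' :: "'u \<Rightarrow> real" and lam' :: "nat \<Rightarrow> real" assume u'0: "\<forall>i\<in>Q. u' i \<ge> 0"
        have "dual_fun I c psi B X Bs K \<delta> (\<lambda>k. max (lam' k) 0) (\<lambda>k. max (- lam' k) 0) u'
           \<le> dual_fun I c psi B X Bs K \<delta> (\<lambda>k. max (lam k) 0) (\<lambda>k. max (- lam k) 0) u"
          using ds feas_max[OF u'0] unfolding dual_solution_def by blast
        thus "G lam' u' \<le> G lam u" unfolding Dmax by simp
      qed
    qed
  qed
  have P2: "\<forall>\<alpha> \<beta> u. dual_solution I c psi B X Bs K \<delta> \<alpha> \<beta> u \<longrightarrow>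
          l1_solution Q S Z z c psi dpsi B X Bs K \<delta> (ext u) (\<lambda>k. \<alpha> k - \<beta> k)"
  proof (intro allI impI)
    fix \<alpha> \<beta> :: "nat \<Rightarrow> real" and u :: "'u \<Rightarrow> real" assume ds: "dual_solution I c psi B X Bs K \<delta> \<alpha> \<beta> u"
    hence f: "dual_feasible I K \<alpha> \<beta> u" unfolding dual_solution_def by blast
    show "l1_solution Q S Z z c psi dpsi B X Bs K \<delta> (ext u) (\<lambda>k. \<alpha> k - \<beta> k)"
      unfolding l1iff
    proof (intro conjI allI impI)
      show "\<forall>i\<in>Q. ext u i \<ge> 0" using f ext0 unfolding dual_feasible_def by auto
      fix u' :: "'u \<Rightarrow> real" and lam' :: "nat \<Rightarrow> real" assume u'0: "\<forall>i\<in>Q. u' i \<ge> 0"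
      have "dual_fun I c psi B X Bs K \<delta> (\<lambda>k. max (lam' k) 0) (\<lambda>k. max (- lam' k) 0) u'
           \<le> dual_fun I c psi B X Bs K \<delta> \<alpha> \<beta> u"
        using ds feas_max[OF u'0] unfolding dual_solution_def by blast
      hence "ereal (G lam' u') \<le> ereal (G (\<lambda>k. \<alpha> k - \<beta> k) (ext u))"
        using Dle[OF f] unfolding Dmax by (rule order_trans)
      thus "G lam' u' \<le> G (\<lambda>k. \<alpha> k - \<beta> k) (ext u)" by simp
    qed
  qed
  have P3: "(SUP p\<in>{(\<alpha>, \<beta>, u). dual_feasible I K \<alpha> \<beta> u}.
           dual_fun I c psi B X Bs K \<delta> (fst p) (fst (snd p)) (snd (snd p)))
        = - (INF p\<in>{(u, lam). \<forall>i\<in>Q. u i \<ge> 0}.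
               ereal (l1_obj Q S Z z c psi dpsi B X Bs K \<delta> (fst p) (snd p)))"
    (is "?L = - ?R")
  proof (rule antisym)
    show "?L \<le> - ?R"
    proof (rule SUP_least)
      fix p :: "(nat \<Rightarrow> real) \<times> (nat \<Rightarrow> real) \<times> ('u \<Rightarrow> real)" assume "p \<in> {(\<alpha>, \<beta>, u). dual_feasible I K \<alpha> \<beta> u}"
      then obtain \<alpha> \<beta> u where p: "p = (\<alpha>, \<beta>, u)" and f: "dual_feasible I K \<alpha> \<beta> u" by auto
      have "(ext u, \<lambda>k. \<alpha> k - \<beta> k) \<in> {(u, lam). \<forall>i\<in>Q. u i \<ge> 0}"
        using f ext0 unfolding dual_feasible_def by auto
      hence "?R \<le> ereal (l1_obj Q S Z z c psi dpsi B X Bs K \<delta> (ext u) (\<lambda>k. \<alpha> k - \<beta> k))"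
        by (rule INF_lower2) simp
      hence "?R \<le> - ereal (G (\<lambda>k. \<alpha> k - \<beta> k) (ext u))" unfolding L1 by simp
      hence "ereal (G (\<lambda>k. \<alpha> k - \<beta> k) (ext u)) \<le> - ?R"
        by (subst ereal_minus_le_minus[symmetric]) simp
      thus "dual_fun I c psi B X Bs K \<delta> (fst p) (fst (snd p)) (snd (snd p)) \<le> - ?R"
        using Dle[OF f] unfolding p by simp
    qed
    have "- ?L \<le> ?R"
    proof (rule INF_greatest)
      fix p :: "('u \<Rightarrow> real) \<times> (nat \<Rightarrow> real)" assume "p \<in> {(u, lam). \<forall>i\<in>Q. u i \<ge> (0::real)}"
      then obtain u :: "'u \<Rightarrow> real" and lam :: "nat \<Rightarrow> real" where p: "p = (u, lam)" and u0: "\<forall>i\<in>Q. u i \<ge> 0" by auto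
      have "(\<lambda>k. max (lam k) 0, \<lambda>k. max (- lam k) 0, u) \<in> {(\<alpha>, \<beta>, u). dual_feasible I K \<alpha> \<beta> u}"
        using feas_max[OF u0] by auto
      hence "ereal (G lam u) \<le> ?L"
        by (rule SUP_upper2) (simp add: Dmax)
      hence "- ?L \<le> - ereal (G lam u)" by (simp only: ereal_minus_le_minus)
      thus "- ?L \<le> ereal (l1_obj Q S Z z c psi dpsi B X Bs K \<delta> (fst p) (snd p))"
        unfolding p L1 by simp
    qed
    thus "- ?R \<le> ?L" by (subst ereal_minus_le_minus[symmetric]) simp
  qed
  have P4: "\<forall>w u lam.
          primal_solution I c psi B X Bs K \<delta> w \<and>
          l1_solution Q S Z z c psi dpsi B X Bs K \<delta> u lam \<longrightarrow>
          (\<forall>i\<in>I.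
             w i = rho_deriv dpsi ((\<Sum>k\<in>{1..K}. B k (X i) * lam k) / c i)
                   * of_bool (rho_deriv dpsi ((\<Sum>k\<in>{1..K}. B k (X i) * lam k) / c i) > 0))"
  proof (intro allI impI ballI)
    fix w u :: "'u \<Rightarrow> real" and lam :: "nat \<Rightarrow> real" and i
    assume H: "primal_solution I c psi B X Bs K \<delta> w \<and> l1_solution Q S Z z c psi dpsi B X Bs K \<delta> u lam"
    assume iI: "i \<in> I"
    have prim: "primal_solution I c psi B X Bs K \<delta> w" using H by blast
    have u0: "\<forall>i\<in>Q. u i \<ge> 0" and opt: "\<forall>u' lam'. (\<forall>i\<in>Q. u' i \<ge> 0) \<longrightarrow> G lam' u' \<le> G lam u"
      using H l1iff by blast+
    have uI: "\<forall>j\<in>I. u j \<ge> 0" using u0 IQ by auto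
    define t where "t = tt B X K c lam u"
    define wh where "wh = (\<lambda>j. Wf dpsi (t j))"
    have Wc: "isCont (Wf dpsi) v" for v by (rule W_cont[OF psi_twice])
    have wh0: "wh j \<ge> 0" if jI: "j \<in> I" for j
    proof -
      have cj: "c j > 0" using cI jI by auto
      have "0 \<le> Wf dpsi (t j - s / c j)" if s: "0 < s \<and> s < 1" for s
      proof -
        have "\<forall>i\<in>Q. (u(j := u j + s)) i \<ge> 0" using u0 s jI IQ by auto
        hence "G lam (u(j := u j + s)) \<le> G lam u" using opt by blast
        moreover have "G lam (u(j := u j + s)) - G lam u \<ge> - s * Wf dpsi (t j - s / c j)"
          unfolding G_def t_def by (rule u_pert[OF finI cI jI])
        ultimately have "s * Wf dpsi (t j - s / c j) \<ge> 0" by linarith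
        thus ?thesis using s by (simp add: zero_le_mult_iff)
      qed
      moreover have "isCont (\<lambda>s. Wf dpsi (t j - s / c j)) 0"
        using cj by (intro isCont_o2[where f="\<lambda>s. t j - s / c j", OF _ Wc] continuous_intros) auto
      ultimately have "0 \<le> Wf dpsi (t j - 0 / c j)"
        using lim_right_ge[where g="\<lambda>s. Wf dpsi (t j - s / c j)" and e=1 and a=0] by auto
      thus ?thesis by (simp add: wh_def)
    qed
    have whz: "wh j = 0" if jI: "j \<in> I" and uj: "u j > 0" for j
    proof -
      have cj: "c j > 0" using cI jI by auto
      have "Wf dpsi (t j + s / c j) \<le> 0" if s: "0 < s \<and> s < u j" for s
      proof -
        have "\<forall>i\<in>Q. (u(j := u j + - s)) i \<ge> 0" using u0 s jI IQ by auto
        hence "G lam (u(j := u j + - s)) \<le> G lam u" using opt by blast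
        moreover have "G lam (u(j := u j + - s)) - G lam u \<ge> - (- s) * Wf dpsi (t j - (- s) / c j)"
          unfolding G_def t_def by (rule u_pert[OF finI cI jI])
        ultimately have "s * Wf dpsi (t j + s / c j) \<le> 0" by simp
        thus ?thesis using s by (simp add: mult_le_0_iff)
      qed
      moreover have "isCont (\<lambda>s. Wf dpsi (t j + s / c j)) 0"
        using cj by (intro isCont_o2[where f="\<lambda>s. t j + s / c j", OF _ Wc] continuous_intros) auto
      ultimately have "Wf dpsi (t j + 0 / c j) \<le> 0"
        using lim_right_le[where g="\<lambda>s. Wf dpsi (t j + s / c j)" and e="u j" and a=0] uj by auto
      thus ?thesis using wh0[OF jI] by (simp add: wh_def)
    qed
    have comp: "u j * wh j = 0" if "j \<in> I" for j
      using whz[OF that] uI that by (cases "u j > 0") auto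
    have Wc2: "isCont (\<lambda>s. Wf dpsi (f s)) a" if "isCont f a" for f :: "real \<Rightarrow> real" and a
      by (rule isCont_o2[OF that Wc])
    have balk: "\<bar>bal I B X wh k - Bs k\<bar> \<le> \<delta> k \<and> lam k * (bal I B X wh k - Bs k) = \<bar>lam k\<bar> * \<delta> k"
      if k: "k \<in> {1..K}" for k
    proof -
      define \<phi> where "\<phi> = (\<lambda>s. \<Sum>i\<in>I. B k (X i) * Wf dpsi (t i + s * B k (X i) / c i))"
      have \<phi>0: "\<phi> 0 = bal I B X wh k"
        unfolding \<phi>_def bal_def wh_def by (simp add: mult.commute)
      have \<phi>c: "isCont \<phi> 0"
        unfolding \<phi>_def using cI by (intro continuous_intros Wc2) auto
      have dk: "\<delta> k \<ge> 0" using delta_nonneg k by auto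
      have P: "s * \<phi> s - s * Bs k - \<delta> k * (\<bar>lam k + s\<bar> - \<bar>lam k\<bar>) \<le> 0" for s
      proof -
        have "G (lam(k := lam k + s)) u \<le> G lam u" using opt u0 by blast
        moreover have "G (lam(k := lam k + s)) u - G lam u \<ge> s * \<phi> s - s * Bs k - \<delta> k * (\<bar>lam k + s\<bar> - \<bar>lam k\<bar>)"
          unfolding G_def \<phi>_def t_def by (rule lam_pert[OF finI cI k])
        ultimately show ?thesis by linarith
      qed
      have up: "\<phi> 0 \<le> Bs k + \<delta> k"
      proof (rule lim_right_le[OF \<phi>c zero_less_one], intro allI impI)
        fix s :: real assume s: "0 < s \<and> s < 1"
        have "\<bar>lam k + s\<bar> - \<bar>lam k\<bar> \<le> s" using s by linarith
        hence "\<delta> k * (\<bar>lam k + s\<bar> - \<bar>lam k\<bar>) \<le> \<delta> k * s" using dk by (rule mult_left_mono)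
        hence "s * (\<phi> s - Bs k - \<delta> k) \<le> 0" using P[of s] by (simp add: algebra_simps)
        thus "\<phi> s \<le> Bs k + \<delta> k" using s by (simp add: mult_le_0_iff)
      qed
      have lo: "Bs k - \<delta> k \<le> \<phi> 0"
      proof (rule lim_left_ge[OF \<phi>c zero_less_one], intro allI impI)
        fix r :: real assume r: "0 < r \<and> r < 1"
        have "\<bar>lam k + - r\<bar> - \<bar>lam k\<bar> \<le> r" using r by linarith
        hence "\<delta> k * (\<bar>lam k + - r\<bar> - \<bar>lam k\<bar>) \<le> \<delta> k * r" using dk by (rule mult_left_mono)
        hence "r * (Bs k - \<delta> k - \<phi> (- r)) \<le> 0" using P[of "- r"] by (simp add: algebra_simps)
        thus "Bs k - \<delta> k \<le> \<phi> (- r)" using r by (simp add: mult_le_0_iff)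
      qed
      have pos: "Bs k + \<delta> k \<le> \<phi> 0" if lp: "lam k > 0"
      proof (rule lim_left_ge[OF \<phi>c lp], intro allI impI)
        fix r :: real assume r: "0 < r \<and> r < lam k"
        have "\<bar>lam k + - r\<bar> - \<bar>lam k\<bar> = - r" using r lp by linarith
        hence hh: "\<delta> k * (\<bar>lam k + - r\<bar> - \<bar>lam k\<bar>) = - (\<delta> k * r)" by simp
        have "r * (Bs k + \<delta> k - \<phi> (- r)) \<le> 0" using P[of "- r", unfolded hh] by (simp add: algebra_simps)
        thus "Bs k + \<delta> k \<le> \<phi> (- r)" using r by (simp add: mult_le_0_iff)
      qed
      have neg: "\<phi> 0 \<le> Bs k - \<delta> k" if ln: "lam k < 0"
      proof -
        have e: "- lam k > 0" using ln by simp
        show ?thesis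
        proof (rule lim_right_le[OF \<phi>c e], intro allI impI)
          fix s :: real assume s: "0 < s \<and> s < - lam k"
          have "\<bar>lam k + s\<bar> - \<bar>lam k\<bar> = - s" using s ln by linarith
          hence hh: "\<delta> k * (\<bar>lam k + s\<bar> - \<bar>lam k\<bar>) = - (\<delta> k * s)" by simp
          have "s * (\<phi> s - Bs k + \<delta> k) \<le> 0" using P[of s, unfolded hh] by (simp add: algebra_simps)
          thus "\<phi> s \<le> Bs k - \<delta> k" using s by (simp add: mult_le_0_iff)
        qed
      qed
      have "\<bar>\<phi> 0 - Bs k\<bar> \<le> \<delta> k" using up lo by linarith
      moreover have "lam k * (\<phi> 0 - Bs k) = \<bar>lam k\<bar> * \<delta> k"
      proof (cases "lam k > 0")
        case True
        hence "\<phi> 0 - Bs k = \<delta> k" using up pos by linarith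
        thus ?thesis using True by simp
      next
        case False
        show ?thesis
        proof (cases "lam k < 0")
          case True
          hence "\<phi> 0 - Bs k = - \<delta> k" using lo neg by linarith
          thus ?thesis using True by simp
        next
          case False
          with \<open>\<not> lam k > 0\<close> have "lam k = 0" by simp
          thus ?thesis by simp
        qed
      qed
      ultimately show ?thesis unfolding \<phi>0 by simp
    qed
    have whfeas: "primal_feasible I B X Bs K \<delta> wh"
      unfolding primal_feasible_def using balk wh0 by auto
    have lamsum: "(\<Sum>k\<in>{1..K}. lam k * bal I B X wh k) = (\<Sum>k\<in>{1..K}. Bs k * lam k) + (\<Sum>k\<in>{1..K}. \<bar>lam k\<bar> * \<delta> k)"
    proof -
      have "(\<Sum>k\<in>{1..K}. lam k * bal I B X wh k) = (\<Sum>k\<in>{1..K}. Bs k * lam k + \<bar>lam k\<bar> * \<delta> k)"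
      proof (rule sum.cong[OF refl])
        fix k assume "k \<in> {1..K}"
        from balk[OF this] show "lam k * bal I B X wh k = Bs k * lam k + \<bar>lam k\<bar> * \<delta> k"
          by (simp add: algebra_simps)
      qed
      thus ?thesis by (simp add: sum.distrib)
    qed
    have c0: "\<forall>j\<in>I. c j \<noteq> 0" using cI by auto
    have ctw: "(\<Sum>j\<in>I. c j * t j * x j) = (\<Sum>k\<in>{1..K}. lam k * bal I B X x k) - (\<Sum>j\<in>I. u j * x j)" for x
      unfolding t_def by (rule ct_sum[OF c0])
    have Gval: "G lam u = (\<Sum>j\<in>I. c j * rho psi dpsi (t j)) - (\<Sum>k\<in>{1..K}. Bs k * lam k) - (\<Sum>k\<in>{1..K}. \<bar>lam k\<bar> * \<delta> k)"
      unfolding G_def Gf_def t_def ..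
    have rsum: "(\<Sum>j\<in>I. c j * rho psi dpsi (t j)) = primal_obj I c psi wh + (\<Sum>j\<in>I. c j * t j * wh j)"
    proof -
      have "(\<Sum>j\<in>I. c j * rho psi dpsi (t j)) = (\<Sum>j\<in>I. c j * psi (wh j) + c j * t j * wh j)"
        by (rule sum.cong[OF refl]) (simp add: rho_eq wh_def algebra_simps)
      thus ?thesis unfolding primal_obj_def by (simp add: sum.distrib)
    qed
    have uwh: "(\<Sum>j\<in>I. u j * wh j) = 0" using comp by (intro sum.neutral ballI) blast
    have objwh: "primal_obj I c psi wh = G lam u"
      using Gval rsum ctw[of wh] uwh lamsum by linarith
    have wfeas: "primal_feasible I B X Bs K \<delta> w" and wopt: "primal_obj I c psi w \<le> primal_obj I c psi wh"
      using prim whfeas unfolding primal_solution_def by blast+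
    have w0: "\<forall>j\<in>I. w j \<ge> 0" using wfeas unfolding primal_feasible_def by blast
    define sl where "sl = (\<lambda>j. c j * (psi (w j) + t j * w j - rho psi dpsi (t j)))"
    have sl0: "sl j \<ge> 0" if "j \<in> I" for j
    proof -
      have "c j > 0" using cI that by auto
      moreover have "psi (w j) + t j * w j - rho psi dpsi (t j) \<ge> 0" using rho_le[of "t j" "w j"] by simp
      ultimately show ?thesis unfolding sl_def by simp
    qed
    have slsum: "(\<Sum>j\<in>I. sl j) = primal_obj I c psi w + (\<Sum>j\<in>I. c j * t j * w j) - (\<Sum>j\<in>I. c j * rho psi dpsi (t j))"
    proof -
      have "(\<Sum>j\<in>I. sl j) = (\<Sum>j\<in>I. (c j * psi (w j) + c j * t j * w j) - c j * rho psi dpsi (t j))"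
        unfolding sl_def by (rule sum.cong[OF refl]) (simp add: algebra_simps)
      thus ?thesis unfolding primal_obj_def by (simp add: sum.distrib sum_subtractf)
    qed
    have uw: "(\<Sum>j\<in>I. u j * w j) \<ge> 0" using uI w0 by (intro sum_nonneg) simp
    have lamw: "(\<Sum>k\<in>{1..K}. lam k * bal I B X w k) \<le> (\<Sum>k\<in>{1..K}. Bs k * lam k) + (\<Sum>k\<in>{1..K}. \<bar>lam k\<bar> * \<delta> k)"
    proof -
      have "(\<Sum>k\<in>{1..K}. lam k * bal I B X w k) \<le> (\<Sum>k\<in>{1..K}. Bs k * lam k + \<bar>lam k\<bar> * \<delta> k)"
      proof (rule sum_mono)
        fix k assume k: "k \<in> {1..K}"
        have b: "\<bar>bal I B X w k - Bs k\<bar> \<le> \<delta> k" using wfeas k unfolding primal_feasible_def by blast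
        have "lam k * (bal I B X w k - Bs k) \<le> \<bar>lam k * (bal I B X w k - Bs k)\<bar>" by (rule abs_ge_self)
        also have "\<dots> = \<bar>lam k\<bar> * \<bar>bal I B X w k - Bs k\<bar>" by (rule abs_mult)
        also have "\<dots> \<le> \<bar>lam k\<bar> * \<delta> k" using b by (intro mult_left_mono) auto
        finally show "lam k * bal I B X w k \<le> Bs k * lam k + \<bar>lam k\<bar> * \<delta> k"
          by (simp add: algebra_simps)
      qed
      thus ?thesis by (simp add: sum.distrib)
    qed
    have "(\<Sum>j\<in>I. sl j) \<le> 0"
      using slsum ctw[of w] uw lamw Gval objwh wopt by linarith
    hence "(\<Sum>j\<in>I. sl j) = 0" using sl0 by (meson sum_nonneg order_antisym)
    hence "sl i = 0" using sum_nonneg_eq_0_iff[OF finI] sl0 iI by blast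
    moreover have "c i > 0" using cI iI by blast
    ultimately have "psi (w i) + t i * w i - rho psi dpsi (t i) = 0" unfolding sl_def by simp
    hence wi: "w i = wh i" unfolding wh_def by (intro rho_min_unique) simp
    define v where "v = (\<Sum>k\<in>{1..K}. B k (X i) * lam k) / c i"
    have ci: "c i > 0" using cI iI by auto
    have tv: "t i = v - u i / c i" unfolding t_def tt_def v_def by (simp add: diff_divide_distrib)
    show "w i = rho_deriv dpsi ((\<Sum>k\<in>{1..K}. B k (X i) * lam k) / c i)
                   * of_bool (rho_deriv dpsi ((\<Sum>k\<in>{1..K}. B k (X i) * lam k) / c i) > 0)"
      unfolding v_def[symmetric] rho_deriv_eq
    proof (cases "u i > 0")
      case True
      have "wh i = 0" by (rule whz[OF iI True])
      moreover have "t i < v" using tv True ci by simp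
      hence "Wf dpsi v < Wf dpsi (t i)" by (rule W_strict_anti)
      ultimately show "w i = Wf dpsi v * of_bool (0 < Wf dpsi v)" using wi unfolding wh_def by simp
    next
      case False
      hence "u i = 0" using uI iI by auto
      hence "t i = v" using tv by simp
      hence "w i = Wf dpsi v" "Wf dpsi v \<ge> 0" using wi wh0[OF iI] unfolding wh_def by auto
      thus "w i = Wf dpsi v * of_bool (0 < Wf dpsi v)" by auto
    qed
  qed
  show ?thesis unfolding I_def[symmetric] Bs_def[symmetric]
    using P1 P2 P3 P4 unfolding ext_def by (intro conjI) assumption+
qed


end
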